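(* Let $J=[\alpha,\beta]$ and let $u:J\to\mathbb R$ be continuous such that $J$ is admissible for $u$. If $u(\alpha)\ge0$ and $u(\beta)\ge0$, then $u(x)\ge0$ for all $x\in J$. Analogously, if $u(\alpha)\le 0$ and $u(\beta)\le 0$, then $u(x)\le0$ for all $x\in J$.
   Context: Double crossover: a continuous $u$ has a double crossover on $[\gamma,\eta]$ if for some $\sigma\in\{\pm1\}$: $\sigma u(\gamma)\ge0$, $\sigma u((\gamma+\eta)/2)\le0$ and $\sigma u(\eta)\ge0$. Dyadic points of $J=[\alpha,\beta]$: $d_{n,k}=\alpha+(\beta-\alpha)k/2^n$, $k=0,\dots,2^n$, $n\in\mathbb N_0$; dyadic subintervals: $[d_{n,k},d_{n,k+1}]$, $k=0,\dots,2^n-1$, $n\in\mathbb N_0$. $J$ is admissible for $u$ if $u$ has no double crossover on any dyadic subinterval of $J$. *)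

theory Defs
  imports "HOL-Analysis.Analysis"
begin

definition double_crossover :: "(real \<Rightarrow> real) \<Rightarrow> real \<Rightarrow> real \<Rightarrow> bool" where
  "double_crossover u \<gamma> \<eta> \<longleftrightarrow>
     (\<exists>\<sigma>\<in>{-1, 1::real}. \<sigma> * u \<gamma> \<ge> 0 \<and> \<sigma> * u ((\<gamma> + \<eta>) / 2) \<le> 0 \<and> \<sigma> * u \<eta> \<ge> 0)"

definition dyadic_point :: "real \<Rightarrow> real \<Rightarrow> nat \<Rightarrow> nat \<Rightarrow> real" where
  "dyadic_point \<alpha> \<beta> n k = \<alpha> + (\<beta> - \<alpha>) * real k / 2 ^ n"

definition admissible :: "(real \<Rightarrow> real) \<Rightarrow> real \<Rightarrow> real \<Rightarrow> bool" where
  "admissible u \<alpha> \<beta> \<longleftrightarrow>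
     (\<forall>n k. k < 2 ^ n \<longrightarrow>
        \<not> double_crossover u (dyadic_point \<alpha> \<beta> n k) (dyadic_point \<alpha> \<beta> n (Suc k)))"

end

theory Submission
  imports Defs
begin

lemma dp_even: "dyadic_point a b (Suc n) (2*k) = dyadic_point a b n k"
  by (simp add: dyadic_point_def field_simps)

lemma dp_odd: "dyadic_point a b (Suc n) (2*k+1) =
   (dyadic_point a b n k + dyadic_point a b n (Suc k)) / 2"
  by (simp add: dyadic_point_def field_simps)

lemma dyadic_nonneg:
  assumes adm: "admissible u a b" and s: "s \<in> {-1, 1::real}"
    and ha: "s * u a \<ge> 0" and hb: "s * u b \<ge> 0"
  shows "\<forall>k \<le> 2^n. s * u (dyadic_point a b n k) \<ge> 0"
proof (induction n)
  case 0
  show ?case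
  proof (intro allI impI)
    fix k :: nat assume "k \<le> 2^0"
    then have "k = 0 \<or> k = 1" by auto
    then show "s * u (dyadic_point a b 0 k) \<ge> 0" using ha hb by (auto simp: dyadic_point_def)
  qed
next
  case (Suc n)
  show ?case
  proof (intro allI impI)
    fix k :: nat assume k: "k \<le> 2 ^ Suc n"
    obtain j where "k = 2*j \<or> k = 2*j+1" by (metis dvd_mult_div_cancel odd_two_times_div_two_succ)
    then show "s * u (dyadic_point a b (Suc n) k) \<ge> 0"
    proof
      assume kj: "k = 2*j"
      then have "j \<le> 2^n" using k by simp
      then show ?thesis using Suc kj dp_even by metis
    next
      assume kj: "k = 2*j+1"
      then have j: "j < 2^n" using k by simp
      have h1: "s * u (dyadic_point a b n j) \<ge> 0" using Suc j by simp
      have h2: "s * u (dyadic_point a b n (Suc j)) \<ge> 0" using Suc j by simp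
      have nd: "\<not> double_crossover u (dyadic_point a b n j) (dyadic_point a b n (Suc j))"
        using adm j unfolding admissible_def by blast
      have "s * u ((dyadic_point a b n j + dyadic_point a b n (Suc j)) / 2) > 0"
        using nd h1 h2 s unfolding double_crossover_def by force
      then show ?thesis unfolding kj dp_odd[of a b n j] by simp
    qed
  qed
qed

lemma main_sigma:
  assumes "a \<le> b" and cont: "continuous_on {a..b} u" and adm: "admissible u a b"
    and s: "s \<in> {-1, 1::real}" and ha: "s * u a \<ge> 0" and hb: "s * u b \<ge> 0"
    and x: "x \<in> {a..b}"
  shows "s * u x \<ge> 0"
proof -
  define S where "S = {y \<in> {a..b}. s * u y \<in> {0..}}"
  have cs: "continuous_on {a..b} (\<lambda>y. s * u y)" using cont by (intro continuous_intros)
  have clS: "closed S"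
  proof -
    have "closed ({a..b} \<inter> (\<lambda>y. s * u y) -` {0..})"
      by (rule continuous_closed_preimage[OF cs]) auto
    moreover have "S = {a..b} \<inter> (\<lambda>y. s * u y) -` {0..}" unfolding S_def by auto
    ultimately show ?thesis by simp
  qed
  define kk where "kk n = nat \<lfloor>(x - a) / (b - a) * 2^n\<rfloor>" for n :: nat
  define d where "d n = dyadic_point a b n (kk n)" for n
  show ?thesis
  proof (cases "a = b")
    case True then show ?thesis using x hb by simp
  next
    case False
    then have ab: "a < b" using assms(1) by simp
    have t0: "0 \<le> (x - a) / (b - a)" "(x - a) / (b - a) \<le> 1" using x ab by auto
    have kle: "kk n \<le> 2^n" for n
    proof -
      have "(x - a) / (b - a) * 2^n \<le> 2^n" using t0 mult_right_mono[OF t0(2), of "2^n"] by simp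
      then have "\<lfloor>(x - a) / (b - a) * 2^n\<rfloor> \<le> 2^n"
        by (metis floor_le_iff of_int_numeral of_int_power floor_of_int le_floor_iff
            floor_mono floor_numeral_power)
      then show ?thesis unfolding kk_def by (simp add: nat_le_iff)
    qed
    have dS: "d n \<in> S" for n
    proof -
      have "s * u (d n) \<ge> 0" using dyadic_nonneg[OF adm s ha hb] kle unfolding d_def by blast
      moreover have "d n \<in> {a..b}"
      proof -
        have "0 \<le> real (kk n) / 2^n" "real (kk n) / 2^n \<le> 1" using kle[of n]
          by (auto simp: divide_le_eq)
        then have "0 \<le> (b - a) * (real (kk n) / 2^n)" "(b - a) * (real (kk n) / 2^n) \<le> b - a"
          using ab mult_left_mono[of "real (kk n) / 2^n" 1 "b - a"] by auto
        then show ?thesis unfolding d_def dyadic_point_def by auto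
      qed
      ultimately show ?thesis unfolding S_def by auto
    qed
    have bound: "\<bar>d n - x\<bar> \<le> (b - a) / 2^n" for n
    proof -
      define t where "t = (x - a) / (b - a) * 2^n"
      have t0': "t \<ge> 0" unfolding t_def using t0 by (intro mult_nonneg_nonneg) auto
      have kk: "real (kk n) = of_int \<lfloor>t\<rfloor>" unfolding kk_def t_def[symmetric] using t0' by simp
      have f: "of_int \<lfloor>t\<rfloor> \<le> t" "t < of_int \<lfloor>t\<rfloor> + 1" by linarith+
      have xe: "x = a + (b - a) * t / 2^n" unfolding t_def using ab by (simp add: field_simps)
      have "d n - x = (b - a) * (real (kk n) - t) / 2^n"
        unfolding d_def dyadic_point_def xe by (simp add: field_simps)
      moreover have "\<bar>real (kk n) - t\<bar> \<le> 1" using kk f by linarith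
      ultimately have "\<bar>d n - x\<bar> = (b - a) * \<bar>real (kk n) - t\<bar> / 2^n" using ab by (simp add: abs_mult)
      also have "\<dots> \<le> (b - a) * 1 / 2^n"
        using \<open>\<bar>real (kk n) - t\<bar> \<le> 1\<close> ab by (intro divide_right_mono mult_left_mono) auto
      finally show ?thesis by simp
    qed
    have lim0: "(\<lambda>n. (b - a) / 2^n) \<longlonglongrightarrow> 0"
      by (intro LIMSEQ_divide_realpow_zero) auto
    have "d \<longlonglongrightarrow> x"
    proof -
      have "(\<lambda>n. d n - x) \<longlonglongrightarrow> 0"
        by (rule Lim_null_comparison[OF _ lim0]) (use bound in \<open>auto intro: always_eventually\<close>)
      then show ?thesis by (simp add: LIM_zero_iff)
    qed
    then have "x \<in> S" using clS dS closed_sequentially by blast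
    then show ?thesis unfolding S_def by auto
  qed
qed

theorem lemma2p3:
  fixes u :: "real \<Rightarrow> real" and \<alpha> \<beta> :: real
  assumes "\<alpha> \<le> \<beta>"
    and "continuous_on {\<alpha>..\<beta>} u"
    and "admissible u \<alpha> \<beta>"
  shows "(u \<alpha> \<ge> 0 \<and> u \<beta> \<ge> 0 \<longrightarrow> (\<forall>x\<in>{\<alpha>..\<beta>}. u x \<ge> 0))
       \<and> (u \<alpha> \<le> 0 \<and> u \<beta> \<le> 0 \<longrightarrow> (\<forall>x\<in>{\<alpha>..\<beta>}. u x \<le> 0))"
proof safe
  fix x assume "u \<alpha> \<ge> 0" "u \<beta> \<ge> 0" "x \<in> {\<alpha>..\<beta>}"
  then show "u x \<ge> 0" using main_sigma[OF assms, of 1 x] by simp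
next
  fix x assume "u \<alpha> \<le> 0" "u \<beta> \<le> 0" "x \<in> {\<alpha>..\<beta>}"
  then show "u x \<le> 0" using main_sigma[OF assms, of "-1" x] by simp
qed

end
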